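(* The expected number of C3's (directed 3-cycles on three distinct vertices, counted up to cyclic rotation) in the OSW graph $G_n$ is $\Theta(n^2)$.
   Context: For an integer $n\ge1$, the $n$-octahedral graph $G'_n=(V,E')$ is the undirected graph with vertex set $V=\{u\in\mathbb{Z}^3:|u_1|+|u_2|+|u_3|=n\}$ and edge set $E'=\{\{v,w\}\subset V: v\neq w,\ |v_i-w_i|\le 1 \text{ for all } i=1,2,3\}$. For $u,v\in V$, $d_{uv}$ denotes the shortest-path distance in $G'_n$, and $Z_u=\left(\sum_{w\in V\setminus\{u\}} d_{uw}^{-2}\right)^{-1}$. The OSW random graph $G_n=(V,E)$ is the directed graph in which, for every $\{u,v\}\in E'$, both $(u,v),(v,u)\in E$, and in addition each vertex $u\in V$, independently of the others, chooses one vertex $v\in V\setminus\{u\}$ with probability $Z_u d_{uv}^{-2}$ and the long-range edge $(u,v)$ is added to $E$. *)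

theory Defs
  imports Complex_Main "HOL-Library.Landau_Symbols" "HOL-Library.FuncSet"
begin

type_synonym pt = "int \<times> int \<times> int"

definition octV :: "nat \<Rightarrow> pt set" where
  "octV n = {(a,b,c). \<bar>a\<bar> + \<bar>b\<bar> + \<bar>c\<bar> = int n}"

definition octAdj :: "nat \<Rightarrow> pt \<Rightarrow> pt \<Rightarrow> bool" where
  "octAdj n u v \<longleftrightarrow> u \<in> octV n \<and> v \<in> octV n \<and> u \<noteq> v \<and>
     \<bar>fst u - fst v\<bar> \<le> 1 \<and> \<bar>fst (snd u) - fst (snd v)\<bar> \<le> 1 \<and>
     \<bar>snd (snd u) - snd (snd v)\<bar> \<le> 1"

definition octDist :: "nat \<Rightarrow> pt \<Rightarrow> pt \<Rightarrow> nat" where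
  "octDist n u v = (LEAST k. (u, v) \<in> {(x, y). octAdj n x y} ^^ k)"

definition octZ :: "nat \<Rightarrow> pt \<Rightarrow> real" where
  "octZ n u = inverse (\<Sum>w\<in>octV n - {u}. 1 / (real (octDist n u w))\<^sup>2)"

text \<open>Probability that u chooses v as the head of its long-range edge.\<close>
definition lrProb :: "nat \<Rightarrow> pt \<Rightarrow> pt \<Rightarrow> real" where
  "lrProb n u v = octZ n u / (real (octDist n u v))\<^sup>2"

text \<open>Outcomes of the randomness: each vertex u chooses f u \<in> V - {u}.
  Probability of an outcome = product of independent choice probabilities.\<close>
definition choices :: "nat \<Rightarrow> (pt \<Rightarrow> pt) set" where
  "choices n = (\<Pi>\<^sub>E u\<in>octV n. octV n - {u})"

definition choiceProb :: "nat \<Rightarrow> (pt \<Rightarrow> pt) \<Rightarrow> real" where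
  "choiceProb n f = (\<Prod>u\<in>octV n. lrProb n u (f u))"

definition oswArc :: "nat \<Rightarrow> (pt \<Rightarrow> pt) \<Rightarrow> pt \<Rightarrow> pt \<Rightarrow> bool" where
  "oswArc n f u v \<longleftrightarrow> octAdj n u v \<or> (u \<in> octV n \<and> f u = v)"

text \<open>Number of directed 3-cycles on distinct vertices, counted up to cyclic
  rotation (ordered triples divided by 3).\<close>
definition numC3 :: "nat \<Rightarrow> (pt \<Rightarrow> pt) \<Rightarrow> real" where
  "numC3 n f = real (card {(u, v, w). u \<in> octV n \<and> v \<in> octV n \<and> w \<in> octV n \<and>
       u \<noteq> v \<and> v \<noteq> w \<and> u \<noteq> w \<and>
       oswArc n f u v \<and> oswArc n f v w \<and> oswArc n f w u}) / 3"

definition expC3 :: "nat \<Rightarrow> real" where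
  "expC3 n = (\<Sum>f\<in>choices n. choiceProb n f * numC3 n f)"

end

theory Submission
  imports Defs
begin

lemma finite_octV: "finite (octV n)"
proof -
  have "octV n \<subseteq> {-int n..int n} \<times> {-int n..int n} \<times> {-int n..int n}"
    by (auto simp: octV_def)
  then show ?thesis by (rule finite_subset) auto
qed

lemma card_octV: "card (octV n) \<le> 3 * (2*n+1)^2"
proof -
  let ?g = "\<lambda>(a::int,b::int,c::int). (a,b,sgn c)"
  have inj: "inj_on ?g (octV n)"
    by (auto simp: inj_on_def octV_def sgn_if abs_if split: if_splits)
  have sub: "?g ` octV n \<subseteq> {-int n..int n} \<times> {-int n..int n} \<times> {-1..1}"
    by (auto simp: octV_def sgn_if)
  have "card (octV n) = card (?g ` octV n)" using card_image[OF inj] by simp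
  also have "\<dots> \<le> card ({-int n..int n} \<times> {-int n..int n} \<times> {-1..(1::int)})"
    by (rule card_mono[OF _ sub]) auto
  also have "\<dots> = (2*n+1) * ((2*n+1) * 3)"
  proof -
    have e: "nat (2*int n+1) = 2*n+1" by arith
    show ?thesis by (simp add: card_cartesian_product e)
  qed
  finally show ?thesis by (simp add: power2_eq_square algebra_simps)
qed

lemma octDist_adj: assumes "octAdj n u v" shows "octDist n u v = 1"
  unfolding octDist_def
proof (rule Least_equality)
  show "(u, v) \<in> {(x, y). octAdj n x y} ^^ 1" using assms by simp
next
  fix k assume "(u, v) \<in> {(x, y). octAdj n x y} ^^ k"
  moreover have "u \<noteq> v" using assms by (simp add: octAdj_def)
  ultimately show "1 \<le> k" by (cases k) auto
qed

lemma neighbor: assumes "u \<in> octV n" "n \<ge> 1" shows "\<exists>v. octAdj n u v"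
proof -
  obtain a b c where u: "u = (a,b,c)" by (cases u) auto
  have s: "\<bar>a\<bar> + \<bar>b\<bar> + \<bar>c\<bar> = int n" using assms u by (simp add: octV_def)
  show ?thesis
  proof (cases "a = 0")
    case False
    let ?v = "(a - sgn a, b + (if b \<ge> 0 then 1 else -1), c)"
    have "octAdj n u ?v" using s False assms(1) u
      by (auto simp: octAdj_def octV_def sgn_if abs_if)
    then show ?thesis by blast
  next
    case True
    show ?thesis
    proof (cases "b = 0")
      case False
      let ?v = "(1, b - sgn b, c)"
      have "octAdj n u ?v" using s False True assms u
        by (auto simp: octAdj_def octV_def sgn_if abs_if)
      then show ?thesis by blast
    next
      case b: True
      let ?v = "(1, 0, c - sgn c)"
      have "octAdj n u ?v" using s b True assms u
        by (auto simp: octAdj_def octV_def sgn_if abs_if)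
      then show ?thesis by blast
    qed
  qed
qed

lemma lrProb_nonneg: "lrProb n u v \<ge> 0"
  unfolding lrProb_def octZ_def by (auto intro!: divide_nonneg_nonneg sum_nonneg)

lemma lrProb_sum: assumes "u \<in> octV n" "n \<ge> 1"
  shows "(\<Sum>v\<in>octV n - {u}. lrProb n u v) = 1"
proof -
  let ?S = "\<Sum>w\<in>octV n - {u}. 1 / (real (octDist n u w))\<^sup>2"
  obtain v where v: "octAdj n u v" using neighbor[OF assms] by blast
  have vin: "v \<in> octV n - {u}" using v by (auto simp: octAdj_def)
  have "1 / (real (octDist n u v))\<^sup>2 \<le> ?S"
    by (rule member_le_sum[OF vin]) (auto intro: finite_octV)
  then have S: "?S \<ge> 1" using octDist_adj[OF v] by simp
  have "(\<Sum>v\<in>octV n - {u}. lrProb n u v) = octZ n u * ?S"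
    unfolding lrProb_def by (simp add: sum_distrib_left divide_inverse)
  also have "\<dots> = 1" using S unfolding octZ_def by simp
  finally show ?thesis .
qed

lemma prob_sum: assumes "n \<ge> 1" shows "(\<Sum>f\<in>choices n. choiceProb n f) = 1"
proof -
  have "(\<Sum>f\<in>choices n. choiceProb n f) = (\<Prod>u\<in>octV n. \<Sum>v\<in>octV n - {u}. lrProb n u v)"
    unfolding choices_def choiceProb_def
    by (rule prod_sum_PiE[symmetric]) (auto intro: finite_octV)
  also have "\<dots> = 1" using lrProb_sum[OF _ assms] by simp
  finally show ?thesis .
qed

lemma choiceProb_nonneg: "choiceProb n f \<ge> 0"
  unfolding choiceProb_def by (auto intro!: prod_nonneg lrProb_nonneg)

definition T3 :: "nat \<Rightarrow> (pt \<Rightarrow> pt) \<Rightarrow> (pt \<times> pt \<times> pt) set" where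
  "T3 n f = {(u, v, w). u \<in> octV n \<and> v \<in> octV n \<and> w \<in> octV n \<and>
       u \<noteq> v \<and> v \<noteq> w \<and> u \<noteq> w \<and>
       oswArc n f u v \<and> oswArc n f v w \<and> oswArc n f w u}"

definition box :: "pt \<Rightarrow> pt set" where
  "box u = {fst u - 1 .. fst u + 1} \<times> {fst (snd u) - 1 .. fst (snd u) + 1}
     \<times> {snd (snd u) - 1 .. snd (snd u) + 1}"

definition Nb :: "(pt \<Rightarrow> pt) \<Rightarrow> pt \<Rightarrow> pt set" where
  "Nb f u = box u \<union> {f u}"

lemma card_box: "card (box u) = 27"
  by (simp add: box_def card_cartesian_product)

lemma card_Nb: "card (Nb f u) \<le> 28" "finite (Nb f u)"
proof -
  have "card (Nb f u) \<le> card (box u) + card {f u}" unfolding Nb_def by (rule card_Un_le)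
  then show "card (Nb f u) \<le> 28" using card_box by simp
  show "finite (Nb f u)" by (simp add: Nb_def box_def)
qed

lemma arc_Nb: assumes "oswArc n f u v" shows "v \<in> Nb f u"
proof -
  obtain a b c where u: "u = (a,b,c)" by (cases u) auto
  obtain x y z where v: "v = (x,y,z)" by (cases v) auto
  show ?thesis
  proof (cases "octAdj n u v")
    case True
    then have "\<bar>a - x\<bar> \<le> 1" "\<bar>b - y\<bar> \<le> 1" "\<bar>c - z\<bar> \<le> 1"
      by (simp_all add: octAdj_def u v)
    then have "v \<in> box u" unfolding box_def u v by (simp add: abs_le_iff)
    then show ?thesis by (simp add: Nb_def)
  next
    case False
    then have "f u = v" using assms by (simp add: oswArc_def)
    then show ?thesis by (simp add: Nb_def)
  qed
qed

lemma card_T3_upper: "card (T3 n f) \<le> card (octV n) * 28 * 28"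
proof -
  have sub: "T3 n f \<subseteq> Sigma (octV n) (\<lambda>u. Sigma (Nb f u) (\<lambda>v. Nb f v))"
    unfolding T3_def using arc_Nb by blast
  have fin: "finite (Sigma (octV n) (\<lambda>u. Sigma (Nb f u) (\<lambda>v. Nb f v)))"
    using finite_octV card_Nb(2) by (intro finite_SigmaI) auto
  have "card (T3 n f) \<le> card (Sigma (octV n) (\<lambda>u. Sigma (Nb f u) (\<lambda>v. Nb f v)))"
    by (rule card_mono[OF fin sub])
  also have "\<dots> = (\<Sum>u\<in>octV n. \<Sum>v\<in>Nb f u. card (Nb f v))"
    using finite_octV card_Nb(2) by (simp add: card_SigmaI)
  also have "\<dots> \<le> (\<Sum>u\<in>octV n. \<Sum>v\<in>Nb f u. 28)"
    by (intro sum_mono card_Nb(1))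
  also have "\<dots> \<le> (\<Sum>u\<in>octV n. 28 * 28)"
    by (intro sum_mono) (use card_Nb(1) in auto)
  finally show ?thesis by simp
qed

lemma card_T3_lower: "card (T3 n f) \<ge> (n div 2) * (n div 2)"
proof -
  define k where "k = n div 2"
  define g where "g = (\<lambda>(a::nat,b::nat).
      ((int a, int b, int n - int a - int b),
       (int a + 1, int b - 1, int n - int a - int b),
       (int a + 1, int b, int n - int a - int b - 1)))"
  have inj: "inj_on g ({0..<k} \<times> {1..k})"
    by (auto simp: inj_on_def g_def)
  have sub: "g ` ({0..<k} \<times> {1..k}) \<subseteq> T3 n f"
  proof
    fix x assume "x \<in> g ` ({0..<k} \<times> {1..k})"
    then obtain a b where ab: "a < k" "1 \<le> b" "b \<le> k" and x: "x = g (a,b)" by auto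
    have "a + b + 1 \<le> n" using ab k_def by linarith
    then have c1: "int n - int a - int b \<ge> 1" by linarith
    have ne: "int n - int a - int b - 1 \<ge> 0" using c1 by linarith
    show "x \<in> T3 n f" unfolding x g_def T3_def oswArc_def octAdj_def octV_def
      using ab c1 ne by simp
  qed
  have fin: "finite (T3 n f)"
  proof -
    have "T3 n f \<subseteq> octV n \<times> octV n \<times> octV n" by (auto simp: T3_def)
    then show ?thesis by (rule finite_subset) (intro finite_SigmaI finite_octV)
  qed
  have "k * k = card (g ` ({0..<k} \<times> {1..k}))"
    using card_image[OF inj] by (simp add: card_cartesian_product)
  also have "\<dots> \<le> card (T3 n f)" by (rule card_mono[OF fin sub])
  finally show ?thesis by (simp add: k_def)
qed

lemma expC3_bounds: assumes "n \<ge> 1"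
  shows "expC3 n \<le> real (card (octV n) * 28 * 28) / 3"
    and "expC3 n \<ge> real ((n div 2) * (n div 2)) / 3"
proof -
  have num: "numC3 n f = real (card (T3 n f)) / 3" for f
    unfolding numC3_def T3_def ..
  have "expC3 n \<le> (\<Sum>f\<in>choices n. choiceProb n f * (real (card (octV n) * 28 * 28) / 3))"
    unfolding expC3_def num
    by (intro sum_mono mult_left_mono divide_right_mono choiceProb_nonneg)
       (use card_T3_upper in \<open>simp only: of_nat_le_iff\<close>)+
  also have "\<dots> = real (card (octV n) * 28 * 28) / 3"
    using prob_sum[OF assms] by (subst sum_distrib_right[symmetric]) simp
  finally show "expC3 n \<le> real (card (octV n) * 28 * 28) / 3" .
  have "real ((n div 2) * (n div 2)) / 3 = (\<Sum>f\<in>choices n. choiceProb n f * (real ((n div 2) * (n div 2)) / 3))"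
    using prob_sum[OF assms] by (subst sum_distrib_right[symmetric]) simp
  also have "\<dots> \<le> expC3 n"
    unfolding expC3_def num
    by (intro sum_mono mult_left_mono divide_right_mono choiceProb_nonneg)
       (use card_T3_lower in \<open>simp only: of_nat_le_iff\<close>)+
  finally show "expC3 n \<ge> real ((n div 2) * (n div 2)) / 3" .
qed

theorem corollary1:
  shows "expC3 \<in> \<Theta>(\<lambda>n. real n ^ 2)"
proof (rule bigthetaI')
  show "(1/48::real) > 0" by simp
  show "(27*28*28::real) > 0" by simp
  show "\<forall>\<^sub>F x in at_top. 1/48 * norm (real x ^ 2) \<le> norm (expC3 x) \<and>
          norm (expC3 x) \<le> 27*28*28 * norm (real x ^ 2)"
    using eventually_ge_at_top[of "2::nat"]
  proof eventually_elim
    case (elim n)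
    then have n1: "n \<ge> 1" by simp
    note b = expC3_bounds[OF n1]
    have h: "real (n div 2) \<ge> real n / 4"
    proof -
      have "2 * (n div 2) + 1 \<ge> n" by linarith
      then have "2 * real (n div 2) + 1 \<ge> real n" by linarith
      then show ?thesis using elim by linarith
    qed
    have "(real n / 4) * (real n / 4) \<le> real (n div 2) * real (n div 2)"
      using h by (intro mult_mono) auto
    then have lo: "real n ^ 2 / 48 \<le> expC3 n"
      using b(2) by (simp add: power2_eq_square)
    have "real (card (octV n)) \<le> 3 * (2*real n+1)^2"
    proof -
      have "real (card (octV n)) \<le> real (3 * (2*n+1)^2)"
        using card_octV[of n] by (simp only: of_nat_le_iff)
      then show ?thesis by (simp add: add.commute)
    qed
    also have "\<dots> \<le> 3 * (3 * real n) ^ 2"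
      using n1 by (intro mult_left_mono power_mono) auto
    finally have cv: "real (card (octV n)) \<le> 27 * real n ^ 2" by (simp add: power_mult_distrib)
    have up: "expC3 n \<le> 27*28*28 * real n ^ 2"
      using b(1) cv by simp
    have nn: "expC3 n \<ge> 0" using lo by (smt (verit) zero_le_power2 divide_nonneg_pos)
    show ?case using lo up nn by simp
  qed
qed

end
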